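(* (1) $\mathrm{alpha}$ is an equivalence relation on the set of good quasiterms, and $\mathrm{alphaAbs}$ is an equivalence relation on the set of good quasiabstractions. (2) On good quasiterms and quasiabstractions, the predicates obtained by replacing the abstraction clause in the definition of $\mathrm{alpha}/\mathrm{alphaAbs}$ by $\mathrm{alphaAbs}(\mathrm{qAbs}\;xs\;x\;X)(\mathrm{qAbs}\;xs'\;x'\;X')\iff xs=xs'\wedge\big(\forall y\notin\{x,x'\}.\ \mathrm{qFresh}\;xs\;y\;X\wedge\mathrm{qFresh}\;xs\;y\;X'\Longrightarrow\mathrm{alpha}(X[y\wedge x]_{xs})(X'[y\wedge x']_{xs})\big)$ coincide with $\mathrm{alpha}$ and $\mathrm{alphaAbs}$.
   Context: Fix types $\mathrm{var}$, $\mathrm{varsort}$, $\mathrm{index}$, $\mathrm{bindex}$, $\mathrm{opsym}$. $(\alpha,\beta)\,\mathrm{input}$ is the type of partial functions $\alpha\to\beta\;\mathrm{option}$; $\mathrm{dom}\,f=\{i\mid f\,i\neq\mathrm{None}\}$. For a predicate $P$, $\uparrow P\;inp$ holds iff $P$ holds of all defined values; for a binary relation $P$, $\uparrow P\;inp\;inp'$ holds iff for every $i$ either $inp\;i=inp'\;i=\mathrm{None}$, or $inp\;i=\mathrm{Some}\;b$, $inp'\;i=\mathrm{Some}\;b'$ and $P\;b\;b'$. Quasiterms/quasiabstractions: mutually recursive free datatypes $\mathrm{qterm}=\mathrm{qVar}\;\mathrm{varsort}\;\mathrm{var}\mid\mathrm{qOp}\;\mathrm{opsym}\;((\mathrm{index},\mathrm{qterm})\mathrm{input})\;((\mathrm{bindex},\mathrm{qabs})\mathrm{input})$,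 $\mathrm{qabs}=\mathrm{qAbs}\;\mathrm{varsort}\;\mathrm{var}\;\mathrm{qterm}$ ($x$ bound in $X$ in $\mathrm{qAbs}\;xs\;x\;X$). $\mathrm{qFresh}\;xs\;x\;X$: the variable $x$ of varsort $xs$ does not occur free in $X$. Swapping $X[y\wedge x]_{xs}$: replace every occurrence (free, bound, or binding) of the variable $y$ of varsort $xs$ by $x$ and vice versa. Alpha-equivalence is defined mutually recursively: $\mathrm{alpha}(\mathrm{qVar}\;xs\;x)(\mathrm{qVar}\;xs'\;x')\iff xs=xs'\wedge x=x'$; $\mathrm{alpha}(\mathrm{qOp}\;\delta\;inp\;binp)(\mathrm{qOp}\;\delta'\;inp'\;binp')\iff\delta=\delta'\wedge\uparrow\mathrm{alpha}\;inp\;inp'\wedge\uparrow\mathrm{alphaAbs}\;binp\;binp'$; $\mathrm{alpha}$ is false between a $\mathrm{qVar}$ and a $\mathrm{qOp}$ quasiterm; $\mathrm{alphaAbs}(\mathrm{qAbs}\;xs\;x\;X)(\mathrm{qAbs}\;xs'\;x'\;X')\iff xs=xs'\wedge\exists y\notin\{x,x'\}.\ \mathrm{qFresh}\;xs\;y\;X\wedge\mathrm{qFresh}\;xs\;y\;X'\wedge\mathrm{alpha}(X[y\wedge x]_{xs})(X'[y\wedge x']_{xs})$. Goodness: $\mathrm{qGood}(\mathrm{qVar}\;xs\;x)$; $\mathrm{qGood}(\mathrm{qOp}\;\delta\;inp\;binp)\iff\uparrow\mathrm{qGood}\;inp\wedge\uparrow\mathrm{qGoodAbs}\;binp\wedge|\mathrm{dom}\;inp|<|\mathrm{var}|\wedge|\mathrm{dom}\;binp|<|\mathrm{var}|$;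 $\mathrm{qGoodAbs}(\mathrm{qAbs}\;xs\;x\;X)\iff\mathrm{qGood}\;X$. Standing assumption: $|\mathrm{var}|$ is an infinite regular cardinal. *)

theory Defs
  imports Main
begin

type_synonym ('i, 'b) input = "'i \<Rightarrow> 'b option"

definition liftAll :: "('b \<Rightarrow> bool) \<Rightarrow> ('i, 'b) input \<Rightarrow> bool" where
  "liftAll P inp \<equiv> \<forall>i b. inp i = Some b \<longrightarrow> P b"

definition liftAll2 :: "('b \<Rightarrow> 'c \<Rightarrow> bool) \<Rightarrow> ('i, 'b) input \<Rightarrow> ('i, 'c) input \<Rightarrow> bool" where
  "liftAll2 P inp inp' \<equiv>
     \<forall>i. (inp i = None \<and> inp' i = None) \<or>
         (\<exists>b b'. inp i = Some b \<and> inp' i = Some b' \<and> P b b')"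

lemma liftAll2_mono[mono]: "(\<And>x y. P x y \<longrightarrow> Q x y) \<Longrightarrow> liftAll2 P inp inp' \<longrightarrow> liftAll2 Q inp inp'"
  unfolding liftAll2_def by blast

datatype ('index, 'bindex, 'varSort, 'var, 'opSym) qTerm =
    qVar 'varSort 'var
  | qOp 'opSym "('index, ('index, 'bindex, 'varSort, 'var, 'opSym) qTerm) input"
               "('bindex, ('index, 'bindex, 'varSort, 'var, 'opSym) qAbs) input"
and ('index, 'bindex, 'varSort, 'var, 'opSym) qAbs =
    qAbs 'varSort 'var "('index, 'bindex, 'varSort, 'var, 'opSym) qTerm"

primrec qFresh :: "'varSort \<Rightarrow> 'var \<Rightarrow> ('index, 'bindex, 'varSort, 'var, 'opSym) qTerm \<Rightarrow> bool"
and qFreshAbs :: "'varSort \<Rightarrow> 'var \<Rightarrow> ('index, 'bindex, 'varSort, 'var, 'opSym) qAbs \<Rightarrow> bool" where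
  "qFresh xs x (qVar ys y) = (ys \<noteq> xs \<or> y \<noteq> x)"
| "qFresh xs x (qOp delta inp binp) =
     ((\<forall>i. pred_option (qFresh xs x) (inp i)) \<and> (\<forall>i. pred_option (qFreshAbs xs x) (binp i)))"
| "qFreshAbs xs x (qAbs ys y X) = ((ys = xs \<and> y = x) \<or> qFresh xs x X)"

definition sw :: "'var \<Rightarrow> 'var \<Rightarrow> 'var \<Rightarrow> 'var" where
  "sw x y z \<equiv> (if x = y then z else if x = z then y else x)"

primrec qSwap :: "'varSort \<Rightarrow> 'var \<Rightarrow> 'var \<Rightarrow> ('index, 'bindex, 'varSort, 'var, 'opSym) qTerm \<Rightarrow> ('index, 'bindex, 'varSort, 'var, 'opSym) qTerm"
and qSwapAbs :: "'varSort \<Rightarrow> 'var \<Rightarrow> 'var \<Rightarrow> ('index, 'bindex, 'varSort, 'var, 'opSym) qAbs \<Rightarrow> ('index, 'bindex, 'varSort, 'var, 'opSym) qAbs" where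
  "qSwap zs z1 z2 (qVar xs x) = qVar xs (if xs = zs then sw x z1 z2 else x)"
| "qSwap zs z1 z2 (qOp delta inp binp) =
     qOp delta (map_option (qSwap zs z1 z2) \<circ> inp) (map_option (qSwapAbs zs z1 z2) \<circ> binp)"
| "qSwapAbs zs z1 z2 (qAbs xs x X) = qAbs xs (if xs = zs then sw x z1 z2 else x) (qSwap zs z1 z2 X)"

abbreviation qSwap_abbrev ("_ #[[_ \<and> _]]'__" 200) where
  "X #[[z1 \<and> z2]]_zs \<equiv> qSwap zs z1 z2 X"

primrec qGood :: "('index, 'bindex, 'varSort, 'var, 'opSym) qTerm \<Rightarrow> bool"
and qGoodAbs :: "('index, 'bindex, 'varSort, 'var, 'opSym) qAbs \<Rightarrow> bool" where
  "qGood (qVar xs x) = True"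
| "qGood (qOp delta inp binp) =
     ((\<forall>i. pred_option qGood (inp i)) \<and> (\<forall>i. pred_option qGoodAbs (binp i)) \<and>
      (card_of (dom inp), card_of (UNIV :: 'var set)) \<in> ordLess \<and> (card_of (dom binp), card_of (UNIV :: 'var set)) \<in> ordLess)"
| "qGoodAbs (qAbs xs x X) = qGood X"

lemma qFresh_liftAll[simp]:
  "qFresh xs x (qOp delta inp binp) = (liftAll (qFresh xs x) inp \<and> liftAll (qFreshAbs xs x) binp)"
  by (auto simp: liftAll_def pred_option_def split: option.splits)

inductive alpha :: "('index, 'bindex, 'varSort, 'var, 'opSym) qTerm \<Rightarrow> ('index, 'bindex, 'varSort, 'var, 'opSym) qTerm \<Rightarrow> bool"
and alphaAbs :: "('index, 'bindex, 'varSort, 'var, 'opSym) qAbs \<Rightarrow> ('index, 'bindex, 'varSort, 'var, 'opSym) qAbs \<Rightarrow> bool" where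
  Var: "alpha (qVar xs x) (qVar xs x)"
| Op: "\<lbrakk>liftAll2 alpha inp inp'; liftAll2 alphaAbs binp binp'\<rbrakk> \<Longrightarrow>
        alpha (qOp delta inp binp) (qOp delta inp' binp')"
| Abs: "\<lbrakk>y \<notin> {x, x'}; qFresh xs y X; qFresh xs y X';
         alpha (X #[[y \<and> x]]_xs) (X' #[[y \<and> x']]_xs)\<rbrakk> \<Longrightarrow>
        alphaAbs (qAbs xs x X) (qAbs xs x' X')"

definition swapsAll ::
  "(('index, 'bindex, 'varSort, 'var, 'opSym) qTerm \<Rightarrow> ('index, 'bindex, 'varSort, 'var, 'opSym) qTerm \<Rightarrow> bool)
   \<Rightarrow> 'varSort \<Rightarrow> 'var \<Rightarrow> ('index, 'bindex, 'varSort, 'var, 'opSym) qTerm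
   \<Rightarrow> 'var \<Rightarrow> ('index, 'bindex, 'varSort, 'var, 'opSym) qTerm \<Rightarrow> bool" where
  "swapsAll R xs x X x' X' \<equiv>
     \<forall>y. y \<notin> {x, x'} \<and> qFresh xs y X \<and> qFresh xs y X' \<longrightarrow>
         R (X #[[y \<and> x]]_xs) (X' #[[y \<and> x']]_xs)"

lemma swapsAll_mono[mono]: "(\<And>x y. R x y \<longrightarrow> S x y) \<Longrightarrow> swapsAll R xs x X x' X' \<longrightarrow> swapsAll S xs x X x' X'"
  unfolding swapsAll_def by blast

inductive alphaAll :: "('index, 'bindex, 'varSort, 'var, 'opSym) qTerm \<Rightarrow> ('index, 'bindex, 'varSort, 'var, 'opSym) qTerm \<Rightarrow> bool"
and alphaAllAbs :: "('index, 'bindex, 'varSort, 'var, 'opSym) qAbs \<Rightarrow> ('index, 'bindex, 'varSort, 'var, 'opSym) qAbs \<Rightarrow> bool" where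
  Var: "alphaAll (qVar xs x) (qVar xs x)"
| Op: "\<lbrakk>liftAll2 alphaAll inp inp'; liftAll2 alphaAllAbs binp binp'\<rbrakk> \<Longrightarrow>
        alphaAll (qOp delta inp binp) (qOp delta inp' binp')"
| Abs: "swapsAll alphaAll xs x X x' X' \<Longrightarrow>
        alphaAllAbs (qAbs xs x X) (qAbs xs x' X')"

end

theory Submission
  imports Defs
begin
type_synonym ('i,'b,'vs,'v,'o) qT = "('i,'b,'vs,'v,'o) qTerm"
type_synonym ('i,'b,'vs,'v,'o) qA = "('i,'b,'vs,'v,'o) qAbs"



lemma qTerm_induct[case_names Var Op Abs]:
  fixes X :: "('i,'b,'vs,'v,'o) qT" and A :: "('i,'b,'vs,'v,'o) qA"
  assumes Var: "\<And>xs x. P (qVar xs x)"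
  and Op: "\<And>d inp binp. (\<And>i Y. inp i = Some Y \<Longrightarrow> P Y) \<Longrightarrow> (\<And>i B. binp i = Some B \<Longrightarrow> Q B) \<Longrightarrow> P (qOp d inp binp)"
  and Abs: "\<And>xs x X. P X \<Longrightarrow> Q (qAbs xs x X)"
  shows "P X" and "Q A"
proof -
  have "P X \<and> Q A"
    apply (rule qTerm_qAbs.induct)
    using Var apply blast
    using Op apply (metis option.set_intros rangeI)
    using Abs by blast
  thus "P X" "Q A" by auto
qed

lemma sw_sw: "sw (sw v c d) a b = sw (sw v a b) (sw c a b) (sw d a b)"
  unfolding sw_def by auto
lemma sw_invol[simp]: "sw (sw v a b) a b = v" unfolding sw_def by auto
lemma sw_inj[simp]: "(sw v a b = sw w a b) = (v = w)" unfolding sw_def by auto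
lemma sw_id[simp]: "sw v a a = v" unfolding sw_def by auto
lemma sw_other[simp]: "v \<noteq> a \<Longrightarrow> v \<noteq> b \<Longrightarrow> sw v a b = v" unfolding sw_def by auto
lemma sw_a[simp]: "sw a a b = b" "sw b a b = a" unfolding sw_def by auto

lemma map_inp_cong: "(\<And>i Y. inp i = Some Y \<Longrightarrow> f Y = g Y) \<Longrightarrow> map_option f \<circ> inp = map_option g \<circ> inp"
  by (rule ext, case_tac "inp x") auto
lemma map_inp_id: "(\<And>i Y. inp i = Some Y \<Longrightarrow> f Y = Y) \<Longrightarrow> map_option f \<circ> inp = inp"
  by (rule ext, case_tac "inp x") auto
lemma map_inp_comp: "map_option f \<circ> (map_option g \<circ> inp) = map_option (f \<circ> g) \<circ> inp"
  by (rule ext, case_tac "inp x") auto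
lemma liftAll_map[simp]: "liftAll P (map_option f \<circ> inp) = liftAll (\<lambda>Y. P (f Y)) inp"
  by (auto simp: liftAll_def)
lemma liftAll_cong: "(\<And>i Y. inp i = Some Y \<Longrightarrow> P Y = Q Y) \<Longrightarrow> liftAll P inp = liftAll Q inp"
  by (auto simp: liftAll_def)

declare qFresh.simps(2)[simp del]

lemma qSwap_conj:
  fixes X :: "('i,'b,'vs,'v,'o) qT" and A :: "('i,'b,'vs,'v,'o) qA"
  shows
  "qSwap zs a b (qSwap zs c d X) = qSwap zs (sw c a b) (sw d a b) (qSwap zs a b X)"
  "qSwapAbs zs a b (qSwapAbs zs c d A) = qSwapAbs zs (sw c a b) (sw d a b) (qSwapAbs zs a b A)"
  by (induct X and A rule: qTerm_induct(1) qTerm_induct(2))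
     (auto simp: sw_sw[of _ c d a b] map_inp_comp intro!: map_inp_cong)

lemma qSwap_comm:
  fixes X :: "('i,'b,'vs,'v,'o) qT" and A :: "('i,'b,'vs,'v,'o) qA"
  shows
  "zs \<noteq> zs' \<Longrightarrow> qSwap zs a b (qSwap zs' c d X) = qSwap zs' c d (qSwap zs a b X)"
  "zs \<noteq> zs' \<Longrightarrow> qSwapAbs zs a b (qSwapAbs zs' c d A) = qSwapAbs zs' c d (qSwapAbs zs a b A)"
  by (induct X and A rule: qTerm_induct(1) qTerm_induct(2))
     (auto simp: map_inp_comp intro!: map_inp_cong)

lemma qSwap_id[simp]:
  fixes X :: "('i,'b,'vs,'v,'o) qT" and A :: "('i,'b,'vs,'v,'o) qA"
  shows
  "qSwap zs a a X = X" "qSwapAbs zs a a A = A"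
  by (induct X and A rule: qTerm_induct(1) qTerm_induct(2))
     (auto intro!: map_inp_id)

lemma qSwap_invol[simp]:
  fixes X :: "('i,'b,'vs,'v,'o) qT" and A :: "('i,'b,'vs,'v,'o) qA"
  shows
  "qSwap zs a b (qSwap zs a b X) = X" "qSwapAbs zs a b (qSwapAbs zs a b A) = A"
  by (induct X and A rule: qTerm_induct(1) qTerm_induct(2))
     (auto simp: map_inp_comp intro!: map_inp_id)

lemma qFresh_qSwap[simp]:
  fixes X :: "('i,'b,'vs,'v,'o) qT" and A :: "('i,'b,'vs,'v,'o) qA"
  shows
  "qFresh xs v (qSwap zs a b X) = qFresh xs (if xs = zs then sw v a b else v) X"
  "qFreshAbs xs v (qSwapAbs zs a b A) = qFreshAbs xs (if xs = zs then sw v a b else v) A"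
proof (induct X and A rule: qTerm_induct(1) qTerm_induct(2))
  case (Op d inp binp)
  let ?v = "if xs = zs then sw v a b else v"
  have "liftAll (\<lambda>Y. qFresh xs v (qSwap zs a b Y)) inp = liftAll (qFresh xs ?v) inp"
    by (rule liftAll_cong) (rule Op(1))
  moreover have "liftAll (\<lambda>Y. qFreshAbs xs v (qSwapAbs zs a b Y)) binp = liftAll (qFreshAbs xs ?v) binp"
    by (rule liftAll_cong) (rule Op(2))
  ultimately show ?case by simp
qed (auto simp: sw_def)

lemma pred_liftAll: "(\<forall>i. pred_option P (inp i)) = liftAll P inp"
  by (auto simp: liftAll_def pred_option_def)

lemma dom_map_inp[simp]: "dom (map_option f \<circ> inp) = dom inp" by (auto simp: dom_def)

declare qGood.simps(2)[simp del]
lemma qGood_qOp[simp]: "qGood (qOp delta inp binp) =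
     (liftAll qGood inp \<and> liftAll qGoodAbs binp \<and>
      (card_of (dom inp), card_of (UNIV :: 'var set)) \<in> ordLess \<and> (card_of (dom binp), card_of (UNIV :: 'var set)) \<in> ordLess)"
  for inp :: "('i, ('i,'b,'vs,'var,'o) qT) input"
  by (simp add: qGood.simps(2) pred_liftAll)

lemma qGood_qSwap[simp]:
  fixes X :: "('i,'b,'vs,'v,'o) qT" and A :: "('i,'b,'vs,'v,'o) qA"
  shows
  "qGood (qSwap zs a b X) = qGood X" "qGoodAbs (qSwapAbs zs a b A) = qGoodAbs A"
proof (induct X and A rule: qTerm_induct(1) qTerm_induct(2))
  case (Op d inp binp)
  have "liftAll (\<lambda>Y. qGood (qSwap zs a b Y)) inp = liftAll qGood inp"
    by (rule liftAll_cong) (rule Op(1))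
  moreover have "liftAll (\<lambda>Y. qGoodAbs (qSwapAbs zs a b Y)) binp = liftAll qGoodAbs binp"
    by (rule liftAll_cong) (rule Op(2))
  ultimately show ?case by simp
qed auto


primrec qSwapL :: "('vs \<times> 'v \<times> 'v) list \<Rightarrow> ('i,'b,'vs,'v,'o) qT \<Rightarrow> ('i,'b,'vs,'v,'o) qT" where
  "qSwapL [] X = X"
| "qSwapL (s # l) X = qSwap (fst s) (fst (snd s)) (snd (snd s)) (qSwapL l X)"

primrec qSwapAbsL :: "('vs \<times> 'v \<times> 'v) list \<Rightarrow> ('i,'b,'vs,'v,'o) qA \<Rightarrow> ('i,'b,'vs,'v,'o) qA" where
  "qSwapAbsL [] A = A"
| "qSwapAbsL (s # l) A = qSwapAbs (fst s) (fst (snd s)) (snd (snd s)) (qSwapAbsL l A)"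

lemma qSwapL_append: "qSwapL (l1 @ l2) X = qSwapL l1 (qSwapL l2 X)"
  by (induct l1) auto

lemma qSwapL_Var: "\<exists>y. qSwapL l (qVar xs x) = qVar xs y"
  by (induct l) auto

lemma qSwapL_Op: "qSwapL l (qOp d inp binp) = qOp d (map_option (qSwapL l) \<circ> inp) (map_option (qSwapAbsL l) \<circ> binp)"
  by (induct l) (auto simp: fun_eq_iff option.map_comp comp_def option.map_ident)

lemma qSwapAbsL_Abs: "\<exists>y. qSwapAbsL l (qAbs xs x X) = qAbs xs y (qSwapL l X)"
  by (induct l) auto

lemma qTerm_swap_induct[case_names Var Op Abs]:
  fixes X :: "('i,'b,'vs,'v,'o) qT" and A :: "('i,'b,'vs,'v,'o) qA"
  assumes hVar: "\<And>xs x. P (qVar xs x)"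
  and hOp: "\<And>d inp binp. (\<And>i Y. inp i = Some Y \<Longrightarrow> P Y) \<Longrightarrow> (\<And>i B. binp i = Some B \<Longrightarrow> Q B) \<Longrightarrow> P (qOp d inp binp)"
  and hAbs: "\<And>xs x X. (\<And>l. P (qSwapL l X)) \<Longrightarrow> Q (qAbs xs x X)"
  shows "P X" and "Q A"
proof -
  have "\<forall>l. P (qSwapL l X)" and "\<forall>l. Q (qSwapAbsL l A)"
  proof (induct X and A rule: qTerm_induct(1) qTerm_induct(2))
    case (Var xs x)
    show ?case
    proof
      fix l
      obtain y where "qSwapL l (qVar xs x :: ('i,'b,'vs,'v,'o) qT) = qVar xs y" using qSwapL_Var[of l xs x] by blast
      then show "P (qSwapL l (qVar xs x))" using hVar by simp
    qed
  next
    case (Op d inp binp)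
    show ?case
    proof
      fix l
      show "P (qSwapL l (qOp d inp binp))" unfolding qSwapL_Op
      proof (rule hOp)
        fix i Y assume "(map_option (qSwapL l) \<circ> inp) i = Some Y"
        then obtain Y0 where "inp i = Some Y0" "Y = qSwapL l Y0" by auto
        then show "P Y" using Op.hyps(1) by blast
      next
        fix i B assume "(map_option (qSwapAbsL l) \<circ> binp) i = Some B"
        then obtain B0 where "binp i = Some B0" "B = qSwapAbsL l B0" by auto
        then show "Q B" using Op.hyps(2) by blast
      qed
    qed
  next
    case (Abs xs x X)
    show ?case
    proof
      fix l
      obtain y where "qSwapAbsL l (qAbs xs x X) = qAbs xs y (qSwapL l X)" using qSwapAbsL_Abs by metis
      moreover have "Q (qAbs xs y (qSwapL l X))"
        by (rule hAbs) (use Abs.hyps in \<open>simp add: qSwapL_append[symmetric]\<close>)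
      ultimately show "Q (qSwapAbsL l (qAbs xs x X))" by simp
    qed
  qed
  then show "P X" "Q A" using qSwapL.simps(1) qSwapAbsL.simps(1) by (metis (no_types))+
qed

lemma qSwap_push:
  "qSwap xs (if xs = zs then sw y a b else y) (if xs = zs then sw x a b else x) (qSwap zs a b X)
   = qSwap zs a b (qSwap xs y x X)"
proof (cases "xs = zs")
  case True
  then show ?thesis using qSwap_conj(1)[of zs a b y x X] by simp
next
  case False
  then show ?thesis using qSwap_comm(1)[of zs xs a b y x X] by simp
qed

lemma liftAll2_map: "liftAll2 P (map_option f \<circ> inp) (map_option g \<circ> inp') = liftAll2 (\<lambda>a b. P (f a) (g b)) inp inp'"
  by (auto simp: liftAll2_def)

lemma liftAll2_imp: "liftAll2 P inp inp' \<Longrightarrow> (\<And>i a b. inp i = Some a \<Longrightarrow> inp' i = Some b \<Longrightarrow> P a b \<Longrightarrow> Q a b) \<Longrightarrow> liftAll2 Q inp inp'"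
  unfolding liftAll2_def by metis

lemma liftAll2_swap: "liftAll2 P inp inp' \<Longrightarrow> liftAll2 (\<lambda>a b. P b a) inp' inp"
  unfolding liftAll2_def by metis

lemma liftAll2_trans: "liftAll2 P inp inp' \<Longrightarrow> liftAll2 Q inp' inp'' \<Longrightarrow>
  (\<And>i a b c. inp i = Some a \<Longrightarrow> inp' i = Some b \<Longrightarrow> inp'' i = Some c \<Longrightarrow> P a b \<Longrightarrow> Q b c \<Longrightarrow> R a c)
  \<Longrightarrow> liftAll2 R inp inp''"
  unfolding liftAll2_def by (metis option.inject option.simps(3))

lemma liftAll2_refl: "(\<And>i a. inp i = Some a \<Longrightarrow> P a a) \<Longrightarrow> liftAll2 P inp inp"
  unfolding liftAll2_def by (metis not_None_eq)

lemma liftAll2_map_left: "(\<And>i a. inp i = Some a \<Longrightarrow> P (f a) a) \<Longrightarrow> liftAll2 P (map_option f \<circ> inp) inp"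
  unfolding liftAll2_def by (metis comp_apply not_None_eq option.map(1) option.map(2))

lemma alpha_qSwap:
  fixes X :: "('i,'b,'vs,'v,'o) qT" and A :: "('i,'b,'vs,'v,'o) qA"
  shows "alpha X Y \<Longrightarrow> alpha (qSwap zs a b X) (qSwap zs a b Y)"
    and "alphaAbs A B \<Longrightarrow> alphaAbs (qSwapAbs zs a b A) (qSwapAbs zs a b B)"
proof (induct rule: alpha_alphaAbs.inducts)
  case (Var xs x)
  then show ?case by (auto intro: alpha_alphaAbs.Var)
next
  case (Op inp inp' binp binp' delta)
  show ?case unfolding qSwap.simps
    by (rule alpha_alphaAbs.Op) (auto simp: liftAll2_map intro: liftAll2_imp[OF Op(1)] liftAll2_imp[OF Op(2)])
next
  case (Abs y x x' xs X X')
  let ?s = "\<lambda>v. if xs = zs then sw v a b else v"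
  have e: "qSwapAbs zs a b (qAbs xs x X) = qAbs xs (?s x) (qSwap zs a b X)"
    "qSwapAbs zs a b (qAbs xs x' X') = qAbs xs (?s x') (qSwap zs a b X')" by simp_all
  show ?case unfolding e
  proof (rule alpha_alphaAbs.Abs[of "?s y"])
    show "?s y \<notin> {?s x, ?s x'}" using Abs by auto
    show "qFresh xs (?s y) (qSwap zs a b X)" "qFresh xs (?s y) (qSwap zs a b X')" using Abs by auto
    show "alpha (qSwap xs (?s y) (?s x) (qSwap zs a b X)) (qSwap xs (?s y) (?s x') (qSwap zs a b X'))"
      unfolding qSwap_push using Abs by simp
  qed
qed

lemma alpha_sym:
  fixes X :: "('i,'b,'vs,'v,'o) qT" and A :: "('i,'b,'vs,'v,'o) qA"
  shows "alpha X Y \<Longrightarrow> alpha Y X"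
    and "alphaAbs A B \<Longrightarrow> alphaAbs B A"
proof (induct rule: alpha_alphaAbs.inducts)
  case (Var xs x)
  then show ?case by (auto intro: alpha_alphaAbs.Var)
next
  case (Op inp inp' binp binp' delta)
  show ?case
    by (rule alpha_alphaAbs.Op) (auto intro: liftAll2_imp[OF liftAll2_swap[OF Op(1)]] liftAll2_imp[OF liftAll2_swap[OF Op(2)]])
next
  case (Abs y x x' xs X X')
  then show ?case by (auto intro: alpha_alphaAbs.Abs)
qed


lemma cinf_UNIV: "infinite (UNIV :: 'v set) \<Longrightarrow> Cinfinite (card_of (UNIV :: 'v set))"
  by (simp add: cinfinite_def Field_card_of card_of_card_order_on)

lemma finite_small: "infinite (UNIV :: 'v set) \<Longrightarrow> finite (S :: 'a set) \<Longrightarrow> (card_of S, card_of (UNIV :: 'v set)) \<in> ordLess"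
  by (rule finite_ordLess_infinite[OF card_of_Well_order card_of_Well_order]) (auto simp: Field_card_of)

lemma small_mono: "(S :: 'v set) \<subseteq> T \<Longrightarrow> (card_of T, card_of (UNIV :: 'v set)) \<in> ordLess \<Longrightarrow> (card_of S, card_of (UNIV :: 'v set)) \<in> ordLess"
  using card_of_mono1 ordLeq_ordLess_trans by blast

lemma qGood_small:
  fixes X :: "('i,'b,'vs,'v,'o) qT" and A :: "('i,'b,'vs,'v,'o) qA"
  assumes inf: "infinite (UNIV :: 'v set)" and reg: "regularCard (card_of (UNIV :: 'v set))"
  shows "qGood X \<Longrightarrow> (card_of {y. \<not> qFresh xs y X}, card_of (UNIV :: 'v set)) \<in> ordLess"
    and "qGoodAbs A \<Longrightarrow> (card_of {y. \<not> qFreshAbs xs y A}, card_of (UNIV :: 'v set)) \<in> ordLess"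
proof (induct X and A rule: qTerm_induct(1) qTerm_induct(2))
  case (Var ys x)
  show ?case by (rule small_mono[of _ "{x}"]) (auto intro: finite_small[OF inf])
next
  case (Op d inp binp)
  let ?U1 = "\<Union>i\<in>dom inp. {y. \<not> qFresh xs y (the (inp i))}"
  let ?U2 = "\<Union>i\<in>dom binp. {y. \<not> qFreshAbs xs y (the (binp i))}"
  have g: "liftAll qGood inp" "liftAll qGoodAbs binp"
    and c: "(card_of (dom inp), card_of (UNIV :: 'v set)) \<in> ordLess" "(card_of (dom binp), card_of (UNIV :: 'v set)) \<in> ordLess"
    using Op.prems by auto
  have "(card_of ?U1, card_of (UNIV :: 'v set)) \<in> ordLess"
  proof (rule card_of_UNION_ordLess_infinite_Field_regularCard[OF reg cinf_UNIV[OF inf] c(1)], rule)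
    fix i assume "i \<in> dom inp"
    then obtain Y where Y: "inp i = Some Y" by auto
    with g have "qGood Y" by (auto simp: liftAll_def)
    then show "(card_of {y. \<not> qFresh xs y (the (inp i))}, card_of (UNIV :: 'v set)) \<in> ordLess"
      using Op.hyps(1)[OF Y] Y by simp
  qed
  moreover have "(card_of ?U2, card_of (UNIV :: 'v set)) \<in> ordLess"
  proof (rule card_of_UNION_ordLess_infinite_Field_regularCard[OF reg cinf_UNIV[OF inf] c(2)], rule)
    fix i assume "i \<in> dom binp"
    then obtain Y where Y: "binp i = Some Y" by auto
    with g have "qGoodAbs Y" by (auto simp: liftAll_def)
    then show "(card_of {y. \<not> qFreshAbs xs y (the (binp i))}, card_of (UNIV :: 'v set)) \<in> ordLess"
      using Op.hyps(2)[OF Y] Y by simp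
  qed
  ultimately have "(card_of (?U1 \<union> ?U2), card_of (UNIV :: 'v set)) \<in> ordLess"
    by (rule card_of_Un_ordLess_infinite[OF inf])
  moreover have "{y. \<not> qFresh xs y (qOp d inp binp)} \<subseteq> ?U1 \<union> ?U2"
  proof
    fix y assume "y \<in> {y. \<not> qFresh xs y (qOp d inp binp)}"
    then have "\<not> liftAll (qFresh xs y) inp \<or> \<not> liftAll (qFreshAbs xs y) binp" by simp
    then show "y \<in> ?U1 \<union> ?U2"
    proof
      assume "\<not> liftAll (qFresh xs y) inp"
      then obtain i b where "inp i = Some b" "\<not> qFresh xs y b" unfolding liftAll_def by blast
      then show ?thesis by (intro UnI1 UN_I[of i]) auto
    next
      assume "\<not> liftAll (qFreshAbs xs y) binp"
      then obtain i b where "binp i = Some b" "\<not> qFreshAbs xs y b" unfolding liftAll_def by blast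
      then show ?thesis by (intro UnI2 UN_I[of i]) auto
    qed
  qed
  ultimately show ?case by (rule small_mono[rotated])
next
  case (Abs ys x X)
  have "{y. \<not> qFreshAbs xs y (qAbs ys x X)} \<subseteq> {y. \<not> qFresh xs y X}" by auto
  then show ?case by (rule small_mono) (use Abs in simp)
qed

lemma pick_fresh:
  fixes Xs :: "('i,'b,'vs,'v,'o) qT list"
  assumes inf: "infinite (UNIV :: 'v set)" and reg: "regularCard (card_of (UNIV :: 'v set))"
  and V: "finite V" and g: "\<forall>X\<in>set Xs. qGood X"
  shows "\<exists>y. y \<notin> V \<and> (\<forall>X\<in>set Xs. qFresh xs y X)"
proof -
  let ?B = "V \<union> (\<Union>X\<in>set Xs. {y. \<not> qFresh xs y X})"
  have "(card_of (\<Union>X\<in>set Xs. {y. \<not> qFresh xs y X}), card_of (UNIV :: 'v set)) \<in> ordLess"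
    by (rule card_of_UNION_ordLess_infinite_Field_regularCard[OF reg cinf_UNIV[OF inf] finite_small[OF inf]])
       (use g in \<open>auto intro: qGood_small(1)[OF inf reg]\<close>)
  then have "(card_of ?B, card_of (UNIV :: 'v set)) \<in> ordLess"
    by (rule card_of_Un_ordLess_infinite[OF inf finite_small[OF inf V]])
  then have "?B \<noteq> UNIV" using ordLess_irreflexive[of "card_of (UNIV::'v set)"] by (metis (no_types))
  then show ?thesis by auto
qed

lemma pick_fresh2:
  fixes X Y :: "('i,'b,'vs,'v,'o) qT"
  assumes inf: "infinite (UNIV :: 'v set)" and reg: "regularCard (card_of (UNIV :: 'v set))"
  and V: "finite V" and g: "qGood X" "qGood Y"
  shows "\<exists>y. y \<notin> V \<and> qFresh xs y X \<and> qFresh xs y Y"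
  using pick_fresh[OF inf reg V, of "[X,Y]" xs] g by auto

lemma pick_fresh3:
  fixes X Y Z :: "('i,'b,'vs,'v,'o) qT"
  assumes inf: "infinite (UNIV :: 'v set)" and reg: "regularCard (card_of (UNIV :: 'v set))"
  and V: "finite V" and g: "qGood X" "qGood Y" "qGood Z"
  shows "\<exists>y. y \<notin> V \<and> qFresh xs y X \<and> qFresh xs y Y \<and> qFresh xs y Z"
  using pick_fresh[OF inf reg V, of "[X,Y,Z]" xs] g by auto

lemma alpha_refl:
  fixes X :: "('i,'b,'vs,'v,'o) qT" and A :: "('i,'b,'vs,'v,'o) qA"
  assumes inf: "infinite (UNIV :: 'v set)" and reg: "regularCard (card_of (UNIV :: 'v set))"
  shows "qGood X \<Longrightarrow> alpha X X" and "qGoodAbs A \<Longrightarrow> alphaAbs A A"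
proof (induct X and A rule: qTerm_swap_induct(1) qTerm_swap_induct(2))
  case (Var xs x)
  show ?case by (rule alpha_alphaAbs.Var)
next
  case (Op d inp binp)
  then show ?case
    by (intro alpha_alphaAbs.Op liftAll2_refl) (auto simp: liftAll_def)
next
  case (Abs xs x X)
  have gX: "qGood X" using Abs.prems by simp
  obtain y where y: "y \<notin> {x}" "qFresh xs y X" using pick_fresh2[OF inf reg, of "{x}" X X xs] gX by auto
  show ?case
    by (rule alpha_alphaAbs.Abs[of y]) (use y gX Abs.hyps[of "[(xs,y,x)]"] in auto)
qed


lemma alpha_swap_fresh:
  fixes X :: "('i,'b,'vs,'v,'o) qT" and A :: "('i,'b,'vs,'v,'o) qA"
  assumes inf: "infinite (UNIV :: 'v set)" and reg: "regularCard (card_of (UNIV :: 'v set))"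
  shows "qGood X \<Longrightarrow> qFresh zs y X \<Longrightarrow> qFresh zs z X \<Longrightarrow> alpha (qSwap zs z y X) X"
    and "qGoodAbs A \<Longrightarrow> qFreshAbs zs y A \<Longrightarrow> qFreshAbs zs z A \<Longrightarrow> alphaAbs (qSwapAbs zs z y A) A"
proof (induct X and A rule: qTerm_swap_induct(1) qTerm_swap_induct(2))
  case (Var xs x)
  then have "qSwap zs z y (qVar xs x) = qVar xs x" by (auto simp: sw_def)
  then show ?case by (simp add: alpha_alphaAbs.Var)
next
  case (Op d inp binp)
  show ?case unfolding qSwap.simps
  proof (rule alpha_alphaAbs.Op)
    show "liftAll2 alpha (map_option (qSwap zs z y) \<circ> inp) inp"
    proof (rule liftAll2_map_left)
      fix i a assume a: "inp i = Some a"
      show "alpha (qSwap zs z y a) a"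
        by (rule Op.hyps(1)[OF a]) (use Op.prems a in \<open>auto simp: liftAll_def\<close>)
    qed
    show "liftAll2 alphaAbs (map_option (qSwapAbs zs z y) \<circ> binp) binp"
    proof (rule liftAll2_map_left)
      fix i a assume a: "binp i = Some a"
      show "alphaAbs (qSwapAbs zs z y a) a"
        by (rule Op.hyps(2)[OF a]) (use Op.prems a in \<open>auto simp: liftAll_def\<close>)
    qed
  qed
next
  case (Abs xs x X)
  have gX: "qGood X" using Abs.prems by simp
  show ?case
  proof (cases "y = z")
    case True
    then show ?thesis using alpha_refl(2)[OF inf reg, of "qAbs xs x X"] gX by simp
  next
    case False
    obtain w where w: "w \<notin> {x, y, z}" "qFresh xs w X" using pick_fresh2[OF inf reg, of "{x,y,z}" X X xs] gX by auto
    let ?s = "\<lambda>v. if xs = zs then sw v z y else v"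
    have e: "qSwapAbs zs z y (qAbs xs x X) = qAbs xs (?s x) (qSwap zs z y X)" by simp
    have sw: "?s w = w" using w by auto
    have push: "qSwap xs w (?s x) (qSwap zs z y X) = qSwap zs z y (qSwap xs w x X)"
      using qSwap_push[of xs zs w z y x X] sw by simp
    show ?thesis unfolding e
    proof (rule alpha_alphaAbs.Abs[of w])
      show "w \<notin> {?s x, x}" using w by (auto simp: sw_def)
      show "qFresh xs w (qSwap zs z y X)" using w sw by simp
      show "qFresh xs w X" using w by simp
      have "alpha (qSwap zs z y (qSwapL [(xs,w,x)] X)) (qSwapL [(xs,w,x)] X)"
        by (rule Abs.hyps) (use gX w Abs.prems in \<open>auto simp: sw_def\<close>)
      then show "alpha (qSwap xs w (?s x) (qSwap zs z y X)) (qSwap xs w x X)"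
        unfolding push by simp
    qed
  qed
qed

inductive_cases alpha_VarE: "alpha (qVar xs x) Y"
inductive_cases alpha_OpE: "alpha (qOp d inp binp) Y"
inductive_cases alphaAbs_E: "alphaAbs (qAbs xs x X) B"
inductive_cases alphaAll_VarE: "alphaAll (qVar xs x) Y"
inductive_cases alphaAll_OpE: "alphaAll (qOp d inp binp) Y"
inductive_cases alphaAllAbs_E: "alphaAllAbs (qAbs xs x X) B"

lemma alpha_chain:
  fixes t X X' :: "('i,'b,'vs,'v,'o) qT"
  assumes inf: "infinite (UNIV :: 'v set)" and reg: "regularCard (card_of (UNIV :: 'v set))"
  and T: "\<And>Y Z. qGood Y \<Longrightarrow> qGood Z \<Longrightarrow> alpha t Y \<Longrightarrow> alpha Y Z \<Longrightarrow> alpha t Z"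
  and g: "qGood X" "qGood X'"
  and t: "alpha t (qSwap xs z x X)"
  and y: "y \<notin> {x, x'}" "qFresh xs y X" "qFresh xs y X'"
  and a: "alpha (qSwap xs y x X) (qSwap xs y x' X')"
  and z: "z \<notin> {x, x'}" "qFresh xs z X" "qFresh xs z X'"
  shows "alpha t (qSwap xs z x' X')"
proof (cases "z = y")
  case True
  then show ?thesis using T[OF _ _ t] a g by simp
next
  case False
  have sx: "sw x z y = x" "sw x' z y = x'" "sw y z y = z" using False z y by (auto simp: sw_def)
  have e1: "qSwap xs z y (qSwap xs y x X) = qSwap xs z x (qSwap xs z y X)"
    using qSwap_conj(1)[of xs z y y x X] unfolding sx .
  have e2: "qSwap xs z y (qSwap xs y x' X') = qSwap xs z x' (qSwap xs z y X')"
    using qSwap_conj(1)[of xs z y y x' X'] unfolding sx .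
  have "alpha (qSwap xs z x (qSwap xs z y X)) (qSwap xs z x X)"
    by (rule alpha_qSwap(1)) (rule alpha_swap_fresh(1)[OF inf reg g(1) y(2) z(2)])
  then have 1: "alpha (qSwap xs z x X) (qSwap xs z y (qSwap xs y x X))"
    unfolding e1 by (rule alpha_sym)
  have 2: "alpha t (qSwap xs z y (qSwap xs y x X))"
    by (rule T[OF _ _ t 1]) (use g in simp_all)
  have 3: "alpha (qSwap xs z y (qSwap xs y x X)) (qSwap xs z y (qSwap xs y x' X'))"
    by (rule alpha_qSwap(1)[OF a])
  have 4: "alpha t (qSwap xs z y (qSwap xs y x' X'))"
    by (rule T[OF _ _ 2 3]) (use g in simp_all)
  have 5: "alpha (qSwap xs z y (qSwap xs y x' X')) (qSwap xs z x' X')"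
    unfolding e2
    by (rule alpha_qSwap(1)) (rule alpha_swap_fresh(1)[OF inf reg g(2) y(3) z(3)])
  show ?thesis
    by (rule T[OF _ _ 4 5]) (use g in simp_all)
qed

lemma alpha_trans:
  fixes X :: "('i,'b,'vs,'v,'o) qT" and A :: "('i,'b,'vs,'v,'o) qA"
  assumes inf: "infinite (UNIV :: 'v set)" and reg: "regularCard (card_of (UNIV :: 'v set))"
  shows "qGood X \<Longrightarrow> qGood Y \<Longrightarrow> qGood Z \<Longrightarrow> alpha X Y \<Longrightarrow> alpha Y Z \<Longrightarrow> alpha X Z"
    and "qGoodAbs A \<Longrightarrow> qGoodAbs B \<Longrightarrow> qGoodAbs C \<Longrightarrow> alphaAbs A B \<Longrightarrow> alphaAbs B C \<Longrightarrow> alphaAbs A C"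
proof (induct X and A arbitrary: Y Z and B C rule: qTerm_swap_induct(1) qTerm_swap_induct(2))
  case (Var xs x)
  from Var.prems(4) have "Y = qVar xs x" by (rule alpha_VarE) simp
  with Var.prems(5) have "Z = qVar xs x" by (auto elim: alpha_VarE)
  then show ?case by (simp add: alpha_alphaAbs.Var)
next
  case (Op d inp binp)
  from Op.prems(4) obtain inp' binp' where Y: "Y = qOp d inp' binp'"
    and a1: "liftAll2 alpha inp inp'" "liftAll2 alphaAbs binp binp'" by (auto elim: alpha_OpE)
  from Op.prems(5) Y obtain inp'' binp'' where Z: "Z = qOp d inp'' binp''"
    and a2: "liftAll2 alpha inp' inp''" "liftAll2 alphaAbs binp' binp''" by (auto elim: alpha_OpE)
  have g: "liftAll qGood inp" "liftAll qGoodAbs binp" "liftAll qGood inp'" "liftAll qGoodAbs binp'"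
     "liftAll qGood inp''" "liftAll qGoodAbs binp''"
    using Op.prems(1-3) Y Z by auto
  show ?case unfolding Z
  proof (rule alpha_alphaAbs.Op)
    show "liftAll2 alpha inp inp''"
    proof (rule liftAll2_trans[OF a1(1) a2(1)])
      fix i a b c assume h: "inp i = Some a" "inp' i = Some b" "inp'' i = Some c" "alpha a b" "alpha b c"
      have "qGood a" "qGood b" "qGood c" using g h unfolding liftAll_def by blast+
      then show "alpha a c" using Op.hyps(1)[OF h(1)] h by blast
    qed
    show "liftAll2 alphaAbs binp binp''"
    proof (rule liftAll2_trans[OF a1(2) a2(2)])
      fix i a b c assume h: "binp i = Some a" "binp' i = Some b" "binp'' i = Some c" "alphaAbs a b" "alphaAbs b c"
      have "qGoodAbs a" "qGoodAbs b" "qGoodAbs c" using g h unfolding liftAll_def by blast+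
      then show "alphaAbs a c" using Op.hyps(2)[OF h(1)] h by blast
    qed
  qed
next
  case (Abs xs x X)
  from Abs.prems(4) obtain x' X' y where B: "B = qAbs xs x' X'"
    and y: "y \<notin> {x, x'}" "qFresh xs y X" "qFresh xs y X'" and a: "alpha (qSwap xs y x X) (qSwap xs y x' X')"
    by (rule alphaAbs_E) blast
  from Abs.prems(5) obtain x'' X'' y' where C: "C = qAbs xs x'' X''"
    and y': "y' \<notin> {x', x''}" "qFresh xs y' X'" "qFresh xs y' X''" and a': "alpha (qSwap xs y' x' X') (qSwap xs y' x'' X'')"
    unfolding B by (rule alphaAbs_E) blast
  have g: "qGood X" "qGood X'" "qGood X''" using Abs.prems(1-3) B C by auto
  obtain z where z: "z \<notin> {x, x', x''}" "qFresh xs z X" "qFresh xs z X'" "qFresh xs z X''"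
    using pick_fresh3[OF inf reg, of "{x,x',x''}" X X' X'' xs] g by auto
  have T: "\<And>Y Z. qGood Y \<Longrightarrow> qGood Z \<Longrightarrow> alpha (qSwap xs z x X) Y \<Longrightarrow> alpha Y Z \<Longrightarrow> alpha (qSwap xs z x X) Z"
  proof -
    fix Y Z assume h: "qGood Y" "qGood Z" "alpha (qSwap xs z x X) Y" "alpha Y Z"
    have "qGood (qSwapL [(xs,z,x)] X)" using g by simp
    from Abs.hyps[OF this h(1,2)] h(3,4) show "alpha (qSwap xs z x X) Z" by simp
  qed
  have r: "alpha (qSwap xs z x X) (qSwap xs z x X)" using alpha_refl(1)[OF inf reg, of "qSwap xs z x X"] g by simp
  have z1: "z \<notin> {x, x'}" "z \<notin> {x', x''}" "z \<notin> {x, x''}" using z(1) by auto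
  have 1: "alpha (qSwap xs z x X) (qSwap xs z x' X')"
    by (rule alpha_chain[OF inf reg T g(1,2) r y a z1(1) z(2,3)])
  have 2: "alpha (qSwap xs z x X) (qSwap xs z x'' X'')"
    by (rule alpha_chain[OF inf reg T g(2,3) 1 y' a' z1(2) z(3,4)])
  show ?case unfolding C
    by (rule alpha_alphaAbs.Abs[OF z1(3) z(2) z(4) 2])
qed


lemma alphaAbs_all:
  fixes X X' :: "('i,'b,'vs,'v,'o) qT"
  assumes inf: "infinite (UNIV :: 'v set)" and reg: "regularCard (card_of (UNIV :: 'v set))"
  and g: "qGood X" "qGood X'" and a: "alphaAbs (qAbs xs x X) (qAbs xs x' X')"
  and z: "z \<notin> {x, x'}" "qFresh xs z X" "qFresh xs z X'"
  shows "alpha (qSwap xs z x X) (qSwap xs z x' X')"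
proof -
  from a obtain y where y: "y \<notin> {x, x'}" "qFresh xs y X" "qFresh xs y X'"
    and a': "alpha (qSwap xs y x X) (qSwap xs y x' X')"
    by (rule alphaAbs_E) blast
  have T: "\<And>Y Z. qGood Y \<Longrightarrow> qGood Z \<Longrightarrow> alpha (qSwap xs z x X) Y \<Longrightarrow> alpha Y Z \<Longrightarrow> alpha (qSwap xs z x X) Z"
    by (rule alpha_trans(1)[OF inf reg]) (use g in simp_all)
  have r: "alpha (qSwap xs z x X) (qSwap xs z x X)" using alpha_refl(1)[OF inf reg, of "qSwap xs z x X"] g by simp
  show ?thesis by (rule alpha_chain[OF inf reg T g r y a' z])
qed

lemma alpha_imp_alphaAll:
  fixes X :: "('i,'b,'vs,'v,'o) qT" and A :: "('i,'b,'vs,'v,'o) qA"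
  assumes inf: "infinite (UNIV :: 'v set)" and reg: "regularCard (card_of (UNIV :: 'v set))"
  shows "qGood X \<Longrightarrow> qGood Y \<Longrightarrow> alpha X Y \<Longrightarrow> alphaAll X Y"
    and "qGoodAbs A \<Longrightarrow> qGoodAbs B \<Longrightarrow> alphaAbs A B \<Longrightarrow> alphaAllAbs A B"
proof (induct X and A arbitrary: Y and B rule: qTerm_swap_induct(1) qTerm_swap_induct(2))
  case (Var xs x)
  from Var.prems(3) have "Y = qVar xs x" by (rule alpha_VarE) simp
  then show ?case by (simp add: alphaAll_alphaAllAbs.Var)
next
  case (Op d inp binp)
  from Op.prems(3) obtain inp' binp' where Y: "Y = qOp d inp' binp'"
    and a1: "liftAll2 alpha inp inp'" "liftAll2 alphaAbs binp binp'" by (auto elim: alpha_OpE)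
  have g: "liftAll qGood inp" "liftAll qGoodAbs binp" "liftAll qGood inp'" "liftAll qGoodAbs binp'"
    using Op.prems(1-2) Y by auto
  show ?case unfolding Y
  proof (rule alphaAll_alphaAllAbs.Op)
    show "liftAll2 alphaAll inp inp'"
    proof (rule liftAll2_imp[OF a1(1)])
      fix i a b assume h: "inp i = Some a" "inp' i = Some b" "alpha a b"
      have "qGood a" "qGood b" using g h unfolding liftAll_def by blast+
      then show "alphaAll a b" using Op.hyps(1)[OF h(1)] h by blast
    qed
    show "liftAll2 alphaAllAbs binp binp'"
    proof (rule liftAll2_imp[OF a1(2)])
      fix i a b assume h: "binp i = Some a" "binp' i = Some b" "alphaAbs a b"
      have "qGoodAbs a" "qGoodAbs b" using g h unfolding liftAll_def by blast+
      then show "alphaAllAbs a b" using Op.hyps(2)[OF h(1)] h by blast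
    qed
  qed
next
  case (Abs xs x X)
  from Abs.prems(3) obtain x' X' y where B: "B = qAbs xs x' X'"
    by (rule alphaAbs_E) blast
  have g: "qGood X" "qGood X'" using Abs.prems(1,2) B by auto
  have a: "alphaAbs (qAbs xs x X) (qAbs xs x' X')" using Abs.prems(3) B by simp
  show ?case unfolding B
  proof (rule alphaAll_alphaAllAbs.Abs, unfold swapsAll_def, intro allI impI)
    fix z assume z: "z \<notin> {x, x'} \<and> qFresh xs z X \<and> qFresh xs z X'"
    have al: "alpha (qSwap xs z x X) (qSwap xs z x' X')"
      using alphaAbs_all[OF inf reg g a] z by blast
    have "qGood (qSwapL [(xs,z,x)] X)" using g by simp
    from Abs.hyps[OF this, of "qSwap xs z x' X'"] al g
    show "alphaAll (qSwap xs z x X) (qSwap xs z x' X')" by simp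
  qed
qed

lemma alphaAll_imp_alpha:
  fixes X :: "('i,'b,'vs,'v,'o) qT" and A :: "('i,'b,'vs,'v,'o) qA"
  assumes inf: "infinite (UNIV :: 'v set)" and reg: "regularCard (card_of (UNIV :: 'v set))"
  shows "qGood X \<Longrightarrow> qGood Y \<Longrightarrow> alphaAll X Y \<Longrightarrow> alpha X Y"
    and "qGoodAbs A \<Longrightarrow> qGoodAbs B \<Longrightarrow> alphaAllAbs A B \<Longrightarrow> alphaAbs A B"
proof (induct X and A arbitrary: Y and B rule: qTerm_swap_induct(1) qTerm_swap_induct(2))
  case (Var xs x)
  from Var.prems(3) have "Y = qVar xs x" by (rule alphaAll_VarE) simp
  then show ?case by (simp add: alpha_alphaAbs.Var)
next
  case (Op d inp binp)
  from Op.prems(3) obtain inp' binp' where Y: "Y = qOp d inp' binp'"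
    and a1: "liftAll2 alphaAll inp inp'" "liftAll2 alphaAllAbs binp binp'" by (auto elim: alphaAll_OpE)
  have g: "liftAll qGood inp" "liftAll qGoodAbs binp" "liftAll qGood inp'" "liftAll qGoodAbs binp'"
    using Op.prems(1-2) Y by auto
  show ?case unfolding Y
  proof (rule alpha_alphaAbs.Op)
    show "liftAll2 alpha inp inp'"
    proof (rule liftAll2_imp[OF a1(1)])
      fix i a b assume h: "inp i = Some a" "inp' i = Some b" "alphaAll a b"
      have "qGood a" "qGood b" using g h unfolding liftAll_def by blast+
      then show "alpha a b" using Op.hyps(1)[OF h(1)] h by blast
    qed
    show "liftAll2 alphaAbs binp binp'"
    proof (rule liftAll2_imp[OF a1(2)])
      fix i a b assume h: "binp i = Some a" "binp' i = Some b" "alphaAllAbs a b"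
      have "qGoodAbs a" "qGoodAbs b" using g h unfolding liftAll_def by blast+
      then show "alphaAbs a b" using Op.hyps(2)[OF h(1)] h by blast
    qed
  qed
next
  case (Abs xs x X)
  from Abs.prems(3) obtain x' X' where B: "B = qAbs xs x' X'" and sa: "swapsAll alphaAll xs x X x' X'"
    by (rule alphaAllAbs_E) blast
  have g: "qGood X" "qGood X'" using Abs.prems(1,2) B by auto
  obtain z where z: "z \<notin> {x, x'}" "qFresh xs z X" "qFresh xs z X'"
    using pick_fresh2[OF inf reg, of "{x,x'}" X X' xs] g by auto
  have al: "alphaAll (qSwap xs z x X) (qSwap xs z x' X')" using sa z unfolding swapsAll_def by blast
  have "qGood (qSwapL [(xs,z,x)] X)" using g by simp
  from Abs.hyps[OF this, of "qSwap xs z x' X'"] al g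
  have "alpha (qSwap xs z x X) (qSwap xs z x' X')" by simp
  then show ?case unfolding B by (rule alpha_alphaAbs.Abs[OF z])
qed


theorem proposition2:
  assumes "infinite (UNIV :: 'var set)" and "regularCard (card_of (UNIV :: 'var set))"
  shows "equiv {X :: ('index, 'bindex, 'varSort, 'var, 'opSym) qTerm. qGood X}
               {(X, Y). qGood X \<and> qGood Y \<and> alpha X Y}
       \<and> equiv {A :: ('index, 'bindex, 'varSort, 'var, 'opSym) qAbs. qGoodAbs A}
               {(A, B). qGoodAbs A \<and> qGoodAbs B \<and> alphaAbs A B}
       \<and> (\<forall>X Y :: ('index, 'bindex, 'varSort, 'var, 'opSym) qTerm.
            qGood X \<and> qGood Y \<longrightarrow> (alphaAll X Y \<longleftrightarrow> alpha X Y))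
       \<and> (\<forall>A B :: ('index, 'bindex, 'varSort, 'var, 'opSym) qAbs.
            qGoodAbs A \<and> qGoodAbs B \<longrightarrow> (alphaAllAbs A B \<longleftrightarrow> alphaAbs A B))"
proof (intro conjI)
  note inf = assms(1) and reg = assms(2)
  show "equiv {X :: ('index, 'bindex, 'varSort, 'var, 'opSym) qTerm. qGood X}
               {(X, Y). qGood X \<and> qGood Y \<and> alpha X Y}"
  proof (rule equivI)
    show "refl_on {X :: ('index, 'bindex, 'varSort, 'var, 'opSym) qTerm. qGood X} {(X, Y). qGood X \<and> qGood Y \<and> alpha X Y}"
      by (rule refl_onI) (auto intro: alpha_refl(1)[OF inf reg])
    show "sym {(X :: ('index, 'bindex, 'varSort, 'var, 'opSym) qTerm, Y). qGood X \<and> qGood Y \<and> alpha X Y}"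
      by (rule symI) (auto intro: alpha_sym(1))
    show "trans {(X :: ('index, 'bindex, 'varSort, 'var, 'opSym) qTerm, Y). qGood X \<and> qGood Y \<and> alpha X Y}"
      by (rule transI) (auto intro: alpha_trans(1)[OF inf reg])
  qed auto
  show "equiv {A :: ('index, 'bindex, 'varSort, 'var, 'opSym) qAbs. qGoodAbs A}
               {(A, B). qGoodAbs A \<and> qGoodAbs B \<and> alphaAbs A B}"
  proof (rule equivI)
    show "refl_on {A :: ('index, 'bindex, 'varSort, 'var, 'opSym) qAbs. qGoodAbs A} {(A, B). qGoodAbs A \<and> qGoodAbs B \<and> alphaAbs A B}"
      by (rule refl_onI) (auto intro: alpha_refl(2)[OF inf reg])
    show "sym {(A :: ('index, 'bindex, 'varSort, 'var, 'opSym) qAbs, B). qGoodAbs A \<and> qGoodAbs B \<and> alphaAbs A B}"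
      by (rule symI) (auto intro: alpha_sym(2))
    show "trans {(A :: ('index, 'bindex, 'varSort, 'var, 'opSym) qAbs, B). qGoodAbs A \<and> qGoodAbs B \<and> alphaAbs A B}"
      by (rule transI) (auto intro: alpha_trans(2)[OF inf reg])
  qed auto
  show "\<forall>X Y :: ('index, 'bindex, 'varSort, 'var, 'opSym) qTerm.
            qGood X \<and> qGood Y \<longrightarrow> (alphaAll X Y \<longleftrightarrow> alpha X Y)"
    using alpha_imp_alphaAll(1)[OF inf reg] alphaAll_imp_alpha(1)[OF inf reg] by blast
  show "\<forall>A B :: ('index, 'bindex, 'varSort, 'var, 'opSym) qAbs.
            qGoodAbs A \<and> qGoodAbs B \<longrightarrow> (alphaAllAbs A B \<longleftrightarrow> alphaAbs A B)"
    using alpha_imp_alphaAll(2)[OF inf reg] alphaAll_imp_alpha(2)[OF inf reg] by blast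
qed

end
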